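(* Let $R=R_A\,\dot\cup\,R_D$ be a finite set of $n=|R|$ resources partitioned into those of an attacker $A$ and those of all other entities $D$, and let $r=|R_A|/|R_D|$. Suppose each resource is online independently with probability $\rho$ (the steady state). Let $\phi_R$ be the random variable equal to the number of online resources in $R_A$ divided by the number of online resources in $R_D$. Then for every $\alpha\in(0,1/2)$, $$\Pr\left[\phi_R \ge \left(1+\frac{2\alpha}{1-\alpha}\right) r\right] < \left(\frac{e^{\alpha}}{(1+\alpha)^{1+\alpha}}\right)^{\rho n r/(1+r)} + \left(\frac{e^{-\alpha}}{(1-\alpha)^{1-\alpha}}\right)^{\rho n/(1+r)}.$$
   Context: In the steady state, each resource's online/offline status follows the stationary distribution of a two-state Markov chain with failure probability $p$ and recovery probability $q$, so it is online with probability $\rho=q/(p+q)$, independently of all other resources. *)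

theory Defs
  imports "HOL-Probability.Probability"
begin

definition steady_state :: "'a set \<Rightarrow> real \<Rightarrow> ('a \<Rightarrow> bool) pmf" where
  "steady_state R rho = Pi_pmf R False (\<lambda>_. bernoulli_pmf rho)"

definition online_count :: "'a set \<Rightarrow> ('a \<Rightarrow> bool) \<Rightarrow> nat" where
  "online_count S omega = card {x \<in> S. omega x}"

text \<open>phi_R: online resources of the attacker divided by online resources of the
  others, as an extended real; when no resource of R_D is online the ratio is
  taken to be +infinity (conservative convention).\<close>
definition phi :: "'a set \<Rightarrow> 'a set \<Rightarrow> ('a \<Rightarrow> bool) \<Rightarrow> ereal" where
  "phi RA RD omega =
     (if online_count RD omega = 0 then \<infinity>
      else ereal (real (online_count RA omega) / real (online_count RD omega)))"

end

theory Submission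
  imports Defs
begin

lemma prod_count:
  assumes "finite R" "S \<subseteq> R"
  shows "(\<Prod>x\<in>R. (\<lambda>x v. if x \<in> S then (if v then c else 1) else (1::real)) x (omega x)) = c ^ online_count S omega"
proof -
  have fS: "finite S" using assms finite_subset by blast
  have "(\<Prod>x\<in>R. (\<lambda>x v. if x \<in> S then (if v then c else 1) else (1::real)) x (omega x))
      = (\<Prod>x\<in>S. (if omega x then c else 1))"
    using assms by (intro prod.mono_neutral_cong_right) auto
  also have "\<dots> = (\<Prod>x\<in>{x\<in>S. omega x}. c)"
    using fS by (intro prod.mono_neutral_cong_right) auto
  also have "\<dots> = c ^ online_count S omega" by (simp add: online_count_def)
  finally show ?thesis .
qed

lemma expect_count:
  assumes "finite R" "S \<subseteq> R" "0 \<le> rho" "rho \<le> 1" "0 \<le> c"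
  shows "measure_pmf.expectation (steady_state R rho) (\<lambda>omega. c ^ online_count S omega)
     = (1 + rho * (c - 1)) ^ card S"
proof -
  define f where "f = (\<lambda>x v. if x \<in> S then (if v then c else 1) else (1::real))"
  have "measure_pmf.expectation (steady_state R rho) (\<lambda>omega. c ^ online_count S omega)
     = measure_pmf.expectation (Pi_pmf R False (\<lambda>_. bernoulli_pmf rho)) (\<lambda>y. \<Prod>x\<in>R. f x (y x))"
    unfolding steady_state_def f_def using prod_count[OF assms(1,2)] by simp
  also have "\<dots> = (\<Prod>x\<in>R. measure_pmf.expectation (bernoulli_pmf rho) (\<lambda>v. f x v))"
    using assms by (intro expectation_prod_Pi_pmf) (auto simp: f_def integrable_measure_pmf_finite)
  also have "\<dots> = (\<Prod>x\<in>R. if x \<in> S then 1 + rho * (c - 1) else 1)"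
    using assms by (intro prod.cong) (auto simp: f_def algebra_simps)
  also have "\<dots> = (\<Prod>x\<in>S. 1 + rho * (c - 1))"
    using assms by (subst prod.If_cases) (auto simp: Int_absorb1)
  also have "\<dots> = (1 + rho * (c - 1)) ^ card S" by simp
  finally show ?thesis .
qed

lemma markov_count:
  assumes "finite R" "S \<subseteq> R" "0 \<le> rho" "rho \<le> 1" "0 < c" "0 < b"
  shows "measure_pmf.prob (steady_state R rho) {omega. b \<le> c ^ online_count S omega}
     \<le> (1 + rho * (c - 1)) ^ card S / b"
proof -
  have fin: "finite (set_pmf (steady_state R rho))"
  proof -
    have "set_pmf (steady_state R rho) \<subseteq> PiE_dflt R False (\<lambda>_. UNIV)"
      unfolding steady_state_def using assms(1) by (auto simp: set_Pi_pmf PiE_dflt_def)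
    moreover have "finite (PiE_dflt R False (\<lambda>_. (UNIV::bool set)))"
      using assms(1) by (intro finite_PiE_dflt) auto
    ultimately show ?thesis by (rule finite_subset)
  qed
  have "measure_pmf.prob (steady_state R rho) {omega \<in> space (measure_pmf (steady_state R rho)). b \<le> c ^ online_count S omega}
     \<le> measure_pmf.expectation (steady_state R rho) (\<lambda>omega. c ^ online_count S omega) / b"
    using assms fin by (intro integral_Markov_inequality_measure) (auto simp: integrable_measure_pmf_finite)
  thus ?thesis using expect_count[OF assms(1-4)] assms by simp
qed

lemma exp_strict: "x \<noteq> 0 \<Longrightarrow> 1 + x < exp (x::real)"
  by (metis add.commute add_0 exp_minus_greater minus_real_def real_add_minus_iff)

lemma chernoff_gen:
  assumes "finite R" "S \<subseteq> R" "0 \<le> rho" "rho \<le> 1" "0 < c"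
  shows "measure_pmf.prob (steady_state R rho) {omega. c powr t \<le> c ^ online_count S omega}
     \<le> exp (rho * (c - 1) * card S) / c powr t"
    and "0 < rho \<Longrightarrow> card S > 0 \<Longrightarrow> c \<noteq> 1 \<Longrightarrow>
       measure_pmf.prob (steady_state R rho) {omega. c powr t \<le> c ^ online_count S omega}
     < exp (rho * (c - 1) * card S) / c powr t"
proof -
  have m: "measure_pmf.prob (steady_state R rho) {omega. c powr t \<le> c ^ online_count S omega}
     \<le> (1 + rho * (c - 1)) ^ card S / c powr t"
    using assms by (intro markov_count) auto
  have b0: "0 \<le> 1 + rho * (c - 1)"
  proof -
    have "0 \<le> rho * c" using assms by simp
    moreover have "rho \<le> 1" by fact
    ultimately show ?thesis by (simp add: algebra_simps)
  qed
  have e: "exp (rho * (c - 1) * card S) = exp (rho * (c - 1)) ^ card S"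
    by (metis exp_of_nat2_mult)
  have le: "(1 + rho * (c - 1)) ^ card S \<le> exp (rho * (c - 1) * card S)"
    unfolding e by (intro power_mono b0) simp
  show "measure_pmf.prob (steady_state R rho) {omega. c powr t \<le> c ^ online_count S omega}
     \<le> exp (rho * (c - 1) * card S) / c powr t"
    using m le assms by (meson divide_right_mono order_trans powr_ge_zero)
  assume h: "0 < rho" "card S > 0" "c \<noteq> 1"
  have "rho * (c - 1) \<noteq> 0" using h by simp
  hence "1 + rho * (c - 1) < exp (rho * (c - 1))" by (rule exp_strict)
  hence "(1 + rho * (c - 1)) ^ card S < exp (rho * (c - 1) * card S)"
    unfolding e using b0 h by (intro power_strict_mono) auto
  hence "(1 + rho * (c - 1)) ^ card S / c powr t < exp (rho * (c - 1) * card S) / c powr t"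
    using assms by (intro divide_strict_right_mono) auto
  thus "measure_pmf.prob (steady_state R rho) {omega. c powr t \<le> c ^ online_count S omega}
     < exp (rho * (c - 1) * card S) / c powr t" using m by linarith
qed

lemma upper_tail:
  assumes "finite R" "S \<subseteq> R" "0 \<le> rho" "rho \<le> 1" "0 < alpha"
  defines "P \<equiv> measure_pmf.prob (steady_state R rho) {omega. (1 + alpha) * rho * card S \<le> real (online_count S omega)}"
  defines "B \<equiv> (exp alpha / (1 + alpha) powr (1 + alpha)) powr (rho * card S)"
  shows "P \<le> B" and "0 < rho \<Longrightarrow> card S > 0 \<Longrightarrow> P < B"
proof -
  let ?c = "1 + alpha" and ?t = "(1 + alpha) * rho * card S"
  have sub: "{omega. ?t \<le> real (online_count S omega)} \<subseteq> {omega. ?c powr ?t \<le> ?c ^ online_count S omega}"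
  proof safe
    fix omega assume "?t \<le> real (online_count S omega)"
    hence "?c powr ?t \<le> ?c powr real (online_count S omega)" using assms by (intro powr_mono) auto
    thus "?c powr ?t \<le> ?c ^ online_count S omega" using assms by (simp add: powr_realpow)
  qed
  have PP: "P \<le> measure_pmf.prob (steady_state R rho) {omega. ?c powr ?t \<le> ?c ^ online_count S omega}"
    unfolding P_def by (intro measure_pmf.finite_measure_mono sub) auto
  have BB: "B = exp (rho * (?c - 1) * card S) / ?c powr ?t"
    unfolding B_def using assms by (simp add: powr_divide powr_powr exp_powr_real algebra_simps)
  show "P \<le> B" using PP chernoff_gen(1)[OF assms(1-4), of ?c ?t] assms BB by simp
  assume "0 < rho" "card S > 0"
  thus "P < B" using PP chernoff_gen(2)[OF assms(1-4), of ?c ?t] assms BB by simp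
qed

lemma lower_tail:
  assumes "finite R" "S \<subseteq> R" "0 \<le> rho" "rho \<le> 1" "0 < alpha" "alpha < 1"
  defines "P \<equiv> measure_pmf.prob (steady_state R rho) {omega. real (online_count S omega) \<le> (1 - alpha) * rho * card S}"
  defines "B \<equiv> (exp (- alpha) / (1 - alpha) powr (1 - alpha)) powr (rho * card S)"
  shows "P \<le> B"
proof -
  let ?c = "1 - alpha" and ?t = "(1 - alpha) * rho * card S"
  have sub: "{omega. real (online_count S omega) \<le> ?t} \<subseteq> {omega. ?c powr ?t \<le> ?c ^ online_count S omega}"
  proof safe
    fix omega assume "real (online_count S omega) \<le> ?t"
    hence "?c powr ?t \<le> ?c powr real (online_count S omega)" using assms by (intro powr_mono') auto
    thus "?c powr ?t \<le> ?c ^ online_count S omega" using assms by (simp add: powr_realpow)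
  qed
  have PP: "P \<le> measure_pmf.prob (steady_state R rho) {omega. ?c powr ?t \<le> ?c ^ online_count S omega}"
    unfolding P_def by (intro measure_pmf.finite_measure_mono sub) auto
  have BB: "B = exp (rho * (?c - 1) * card S) / ?c powr ?t"
    unfolding B_def using assms by (simp add: powr_divide powr_powr exp_powr_real algebra_simps)
  show "P \<le> B" using PP chernoff_gen(1)[OF assms(1-4), of ?c ?t] assms BB by simp
qed

lemma event_sub:
  fixes a d xa xd rho alpha :: real
  assumes "0 < d" "0 \<le> a" "0 < alpha" "alpha < 1" "0 \<le> rho"
    and "xa < (1 + alpha) * rho * a" "(1 - alpha) * rho * d < xd" "0 \<le> xa"
  shows "xa / xd < (1 + 2 * alpha / (1 - alpha)) * (a / d)"
proof -
  have xd: "0 < xd" using assms by (metis le_less_trans mult_nonneg_nonneg diff_ge_0_iff_ge less_eq_real_def)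
  have K: "1 + 2 * alpha / (1 - alpha) = (1 + alpha) / (1 - alpha)" using assms by (simp add: field_simps)
  have h1: "(1 - alpha) * d * xa < (1 - alpha) * d * ((1 + alpha) * rho * a)"
    using assms by (intro mult_strict_left_mono) auto
  have h2: "(1 + alpha) * a * ((1 - alpha) * rho * d) \<le> (1 + alpha) * a * xd"
    using assms by (intro mult_left_mono) auto
  have "(1 - alpha) * d * xa < (1 + alpha) * a * xd" using h1 h2 by (simp add: algebra_simps)
  thus ?thesis unfolding K using assms xd by (simp add: field_simps)
qed

theorem lemma1:
  fixes RA RD :: "'a set" and rho alpha :: real
  assumes "finite RA" and "finite RD" and "RA \<inter> RD = {}" and "RD \<noteq> {}"
    and "0 \<le> rho" and "rho \<le> 1"
    and "0 < alpha" and "alpha < 1/2"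
  shows "let R = RA \<union> RD; n = real (card R); r = real (card RA) / real (card RD) in
    measure_pmf.prob (steady_state R rho)
       {omega. phi RA RD omega \<ge> ereal ((1 + 2 * alpha / (1 - alpha)) * r)}
    < (exp alpha / (1 + alpha) powr (1 + alpha)) powr (rho * n * r / (1 + r))
      + (exp (- alpha) / (1 - alpha) powr (1 - alpha)) powr (rho * n / (1 + r))"
proof -
  define R where "R = RA \<union> RD"
  define a where "a = real (card RA)"
  define d where "d = real (card RD)"
  have fR: "finite R" using assms R_def by auto
  have d0: "0 < d" using assms d_def by (simp add: card_gt_0_iff)
  have a0: "0 \<le> a" using a_def by simp
  have n: "real (card R) = a + d" unfolding R_def a_def d_def using assms by (simp add: card_Un_disjoint)
  have ad: "a + d \<noteq> 0" using d0 a0 by simp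
  have e1: "rho * (a + d) * (a / d) / (1 + a / d) = rho * a" using d0 a0 ad
  proof -
    have "1 + a / d = (a + d) / d" using d0 by (simp add: field_simps)
    hence "rho * (a + d) * (a / d) / (1 + a / d) = rho * (a + d) * (a / d) * (d / (a + d))" by simp
    also have "\<dots> = rho * a"
    proof -
      have "a * d + d * d \<noteq> 0" using d0 a0 by (metis add_pos_nonneg mult_nonneg_nonneg mult_pos_pos less_eq_real_def less_irrefl add.commute)
      thus ?thesis using ad d0 by (simp add: field_simps)
    qed
    finally show ?thesis .
  qed
  have e2: "rho * (a + d) / (1 + a / d) = rho * d"
  proof -
    have "1 + a / d = (a + d) / d" using d0 by (simp add: field_simps)
    hence "rho * (a + d) / (1 + a / d) = rho * (a + d) * (d / (a + d))" by simp
    also have "\<dots> = rho * d" using ad by (simp add: field_simps)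
    finally show ?thesis .
  qed
  define E where "E = {omega. phi RA RD omega \<ge> ereal ((1 + 2 * alpha / (1 - alpha)) * (a / d))}"
  define E1 where "E1 = {omega. (1 + alpha) * rho * card RA \<le> real (online_count RA omega)}"
  define E2 where "E2 = {omega. real (online_count RD omega) \<le> (1 - alpha) * rho * card RD}"
  define B1 where "B1 = (exp alpha / (1 + alpha) powr (1 + alpha)) powr (rho * a)"
  define B2 where "B2 = (exp (- alpha) / (1 - alpha) powr (1 - alpha)) powr (rho * d)"
  let ?M = "measure_pmf.prob (steady_state R rho)"
  have sub: "E \<subseteq> E1 \<union> E2"
  proof
    fix omega assume om: "omega \<in> E"
    show "omega \<in> E1 \<union> E2"
    proof (rule ccontr)
      assume "omega \<notin> E1 \<union> E2"
      hence h1: "real (online_count RA omega) < (1 + alpha) * rho * a"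
        and h2: "(1 - alpha) * rho * d < real (online_count RD omega)"
        unfolding E1_def E2_def a_def d_def by auto
      have "0 \<le> (1 - alpha) * rho * d" using assms d0 by simp
      hence "online_count RD omega \<noteq> 0" using h2 by auto
      hence ph: "phi RA RD omega = ereal (real (online_count RA omega) / real (online_count RD omega))"
        by (simp add: phi_def)
      have "real (online_count RA omega) / real (online_count RD omega) < (1 + 2 * alpha / (1 - alpha)) * (a / d)"
        using assms d0 a0 h1 h2 by (intro event_sub) auto
      moreover have "ereal ((1 + 2 * alpha / (1 - alpha)) * (a / d)) \<le> phi RA RD omega"
        using om unfolding E_def by simp
      ultimately show False unfolding ph by simp
    qed
  qed
  have P1: "?M E1 \<le> B1" unfolding E1_def B1_def a_def using assms fR R_def by (intro upper_tail(1)) auto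
  have P2: "?M E2 \<le> B2" unfolding E2_def B2_def d_def using assms fR R_def by (intro lower_tail) auto
  have PE: "?M E \<le> ?M E1 + ?M E2"
  proof -
    have "?M E \<le> ?M (E1 \<union> E2)" using sub by (intro measure_pmf.finite_measure_mono) auto
    also have "\<dots> \<le> ?M E1 + ?M E2" by (intro measure_Un_le) auto
    finally show ?thesis .
  qed
  have B2pos: "0 < B2" unfolding B2_def using assms by simp
  have "?M E < B1 + B2"
  proof (cases "0 < rho \<and> 0 < card RA")
    case True
    have "?M E1 < B1" unfolding E1_def B1_def a_def using assms fR R_def True by (intro upper_tail(2)) auto
    thus ?thesis using PE P2 by linarith
  next
    case False
    hence "rho * a = 0" using a_def assms by auto
    moreover have "exp alpha / (1 + alpha) powr (1 + alpha) \<noteq> 0" using assms by simp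
    ultimately have "B1 = 1" unfolding B1_def by (simp only: powr_zero_eq_one) simp
    moreover have "?M E \<le> 1" by simp
    ultimately show ?thesis using B2pos by linarith
  qed
  thus ?thesis unfolding Let_def R_def[symmetric] n e1 e2 a_def[symmetric] d_def[symmetric] E_def B1_def B2_def .
qed

end
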